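(* There is a function $\eta(n)\to 0$ (as $n\to\infty$) such that every Steiner triple system $S$ of order $n$ has at most \[ \left((1+\eta(n))\frac{n}{2e^{2}}\right)^{n/3} \] perfect matchings.
   Context: A Steiner triple system of order $n$ is a 3-uniform hypergraph on the vertex set $[n]$ such that every pair of vertices is contained in exactly one hyperedge. A perfect matching is a set of pairwise disjoint hyperedges covering all vertices. *)

theory Defs
  imports Complex_Main
begin

definition steiner_triple_system :: "nat \<Rightarrow> nat set set \<Rightarrow> bool" where
  "steiner_triple_system n S \<longleftrightarrow>
     (\<forall>e\<in>S. e \<subseteq> {1..n} \<and> card e = 3) \<and>
     (\<forall>x\<in>{1..n}. \<forall>y\<in>{1..n}. x \<noteq> y \<longrightarrow> (\<exists>!e. e \<in> S \<and> {x, y} \<subseteq> e))"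

definition perfect_matching :: "'a set \<Rightarrow> 'a set set \<Rightarrow> 'a set set \<Rightarrow> bool" where
  "perfect_matching V S M \<longleftrightarrow>
     M \<subseteq> S \<and> (\<forall>e\<in>M. \<forall>f\<in>M. e \<noteq> f \<longrightarrow> e \<inter> f = {}) \<and> \<Union>M = V"

end

theory Submission
  imports Defs "HOL-Library.FuncSet" "HOL-Real_Asymp.Real_Asymp"
begin


lemma sum_inv_class:
  fixes h :: "'a \<Rightarrow> 'b"
  assumes "finite C"
  shows "(\<Sum>a\<in>C. 1 / real (card {b\<in>C. h b = h a})) = real (card (h ` C))"
proof -
  have "(\<Sum>a\<in>C. 1 / real (card {b\<in>C. h b = h a}))
      = (\<Sum>y\<in>h ` C. \<Sum>a\<in>{x\<in>C. h x = y}. 1 / real (card {b\<in>C. h b = h a}))"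
    using sum.image_gen[OF assms] by blast
  also have "\<dots> = (\<Sum>y\<in>h ` C. 1)"
  proof (rule sum.cong[OF refl])
    fix y assume "y \<in> h ` C"
    then have ne: "{x\<in>C. h x = y} \<noteq> {}" by auto
    have "(\<Sum>a\<in>{x\<in>C. h x = y}. 1 / real (card {b\<in>C. h b = h a}))
        = (\<Sum>a\<in>{x\<in>C. h x = y}. 1 / real (card {x\<in>C. h x = y}))"
      by (rule sum.cong) auto
    also have "\<dots> = 1" using ne assms by simp
    finally show "(\<Sum>a\<in>{x\<in>C. h x = y}. 1 / real (card {b\<in>C. h b = h a})) = 1" .
  qed
  finally show ?thesis by simp
qed

definition cls :: "'i set \<Rightarrow> ('i \<Rightarrow> 'a \<Rightarrow> 'b) \<Rightarrow> 'a set \<Rightarrow> 'a \<Rightarrow> 'a set" where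
  "cls I g A a = {b\<in>A. \<forall>i\<in>I. g i b = g i a}"

definition br :: "'i set \<Rightarrow> ('i \<Rightarrow> nat) \<Rightarrow> ('i \<Rightarrow> 'a \<Rightarrow> 'b) \<Rightarrow> 'a set \<Rightarrow> 'i \<Rightarrow> 'a \<Rightarrow> 'a set" where
  "br I \<kappa> g A i a = {b\<in>A. \<forall>j\<in>I. \<kappa> j < \<kappa> i \<longrightarrow> g j b = g j a}"

lemma gibbs_step:
  fixes h :: "'a \<Rightarrow> 'b"
  assumes fin: "finite A"
    and P_in: "\<And>a. a \<in> A \<Longrightarrow> a \<in> P a \<and> P a \<subseteq> A"
    and P_eq: "\<And>a b. a \<in> A \<Longrightarrow> b \<in> P a \<Longrightarrow> P b = P a"
  shows "(\<Sum>a\<in>A. ln (real (card (P a)) / real (card {b\<in>P a. h b = h a})))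
       \<le> (\<Sum>a\<in>A. ln (real (card (h ` P a))))"
proof -
  have finP: "finite (P a)" if "a \<in> A" for a using P_in[OF that] fin finite_subset by blast
  define w where "w a = real (card (P a)) / (real (card {b\<in>P a. h b = h a}) * real (card (h ` P a)))" for a
  have pos1: "real (card {b\<in>P a. h b = h a}) > 0" if "a \<in> A" for a
  proof -
    have "a \<in> {b\<in>P a. h b = h a}" using P_in[OF that] by auto
    then show ?thesis using finP[OF that] card_gt_0_iff by fastforce
  qed
  have pos2: "real (card (h ` P a)) > 0" if "a \<in> A" for a
    using P_in[OF that] finP[OF that] card_gt_0_iff by fastforce
  have pos3: "real (card (P a)) > 0" if "a \<in> A" for a
    using P_in[OF that] finP[OF that] card_gt_0_iff by fastforce
  have pt: "ln (real (card (P a)) / real (card {b\<in>P a. h b = h a})) - ln (real (card (h ` P a)))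
      \<le> w a - 1" if "a \<in> A" for a
  proof -
    have "ln (real (card (P a)) / real (card {b\<in>P a. h b = h a})) - ln (real (card (h ` P a)))
        = ln (w a)" unfolding w_def using pos1[OF that] pos2[OF that] pos3[OF that]
      by (simp add: ln_div ln_mult)
    also have "\<dots> \<le> w a - 1" apply (rule ln_le_minus_one) unfolding w_def
      using pos1[OF that] pos2[OF that] pos3[OF that] by simp
    finally show ?thesis .
  qed
  have sumw: "(\<Sum>a\<in>A. w a) = real (card A)"
  proof -
    have "(\<Sum>a\<in>A. w a) = (\<Sum>C\<in>P ` A. \<Sum>a\<in>{x\<in>A. P x = C}. w a)"
      using sum.image_gen[OF fin] by blast
    also have "\<dots> = (\<Sum>C\<in>P ` A. real (card C))"
    proof (rule sum.cong[OF refl])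
      fix C assume "C \<in> P ` A"
      then obtain a0 where a0: "a0 \<in> A" "C = P a0" by auto
      have eqC: "{x\<in>A. P x = C} = C" using a0 P_in P_eq by blast
      have "(\<Sum>a\<in>{x\<in>A. P x = C}. w a) = (\<Sum>a\<in>C. real (card C) / real (card (h ` C)) * (1 / real (card {b\<in>C. h b = h a})))"
        unfolding eqC
      proof (rule sum.cong[OF refl])
        fix a assume "a \<in> C"
        then have "P a = C" using a0 P_eq by blast
        then show "w a = real (card C) / real (card (h ` C)) * (1 / real (card {b\<in>C. h b = h a}))"
          unfolding w_def by simp
      qed
      also have "\<dots> = real (card C) / real (card (h ` C)) * real (card (h ` C))"
      proof -
        have "(\<Sum>a\<in>C. real (card C) / real (card (h ` C)) * (1 / real (card {b\<in>C. h b = h a})))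
          = real (card C) / real (card (h ` C)) * (\<Sum>a\<in>C. 1 / real (card {b\<in>C. h b = h a}))"
          by (rule sum_distrib_left[symmetric])
        also have "\<dots> = real (card C) / real (card (h ` C)) * real (card (h ` C))"
          using sum_inv_class[OF finP[OF a0(1)], of h] a0(2) by simp
        finally show ?thesis .
      qed
      also have "\<dots> = real (card C)" using pos2[OF a0(1)] a0 by simp
      finally show "(\<Sum>a\<in>{x\<in>A. P x = C}. w a) = real (card C)" .
    qed
    also have "\<dots> = (\<Sum>C\<in>P ` A. \<Sum>a\<in>{x\<in>A. P x = C}. 1)"
    proof (rule sum.cong[OF refl])
      fix C assume "C \<in> P ` A"
      then obtain a0 where a0: "a0 \<in> A" "C = P a0" by auto
      have eqC: "{x\<in>A. P x = C} = C" using a0 P_in P_eq by blast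
      show "real (card C) = (\<Sum>a\<in>{x\<in>A. P x = C}. 1)" unfolding eqC by simp
    qed
    also have "\<dots> = (\<Sum>a\<in>A. 1)" using sum.image_gen[OF fin, symmetric] by blast
    finally show ?thesis by simp
  qed
  have "(\<Sum>a\<in>A. ln (real (card (P a)) / real (card {b\<in>P a. h b = h a})) - ln (real (card (h ` P a))))
      \<le> (\<Sum>a\<in>A. w a - 1)" by (rule sum_mono) (use pt in auto)
  also have "\<dots> = 0" using sumw by (simp add: sum_subtractf)
  finally show ?thesis by (simp add: sum_subtractf)
qed

lemma cls_basic:
  assumes "a \<in> A"
  shows "a \<in> cls I g A a" "cls I g A a \<subseteq> A" "\<And>b. b \<in> cls I g A a \<Longrightarrow> cls I g A b = cls I g A a"
  using assms unfolding cls_def by auto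

lemma chain_gen:
  assumes finA: "finite A" and finI: "finite I" and inj: "inj_on \<kappa> I"
  shows "(\<Sum>a\<in>A. ln (real (card A) / real (card (cls I g A a))))
      \<le> (\<Sum>a\<in>A. \<Sum>i\<in>I. ln (real (card (g i ` br I \<kappa> g A i a))))"
proof -
  have "\<forall>S. S \<subseteq> I \<longrightarrow> (\<Sum>a\<in>A. ln (real (card A) / real (card (cls S g A a))))
      \<le> (\<Sum>a\<in>A. \<Sum>i\<in>S. ln (real (card (g i ` br S \<kappa> g A i a))))"
  proof (intro allI impI)
    fix S assume "S \<subseteq> I"
    then have "finite S" using finI finite_subset by blast
    then show "(\<Sum>a\<in>A. ln (real (card A) / real (card (cls S g A a))))
      \<le> (\<Sum>a\<in>A. \<Sum>i\<in>S. ln (real (card (g i ` br S \<kappa> g A i a))))"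
      using \<open>S \<subseteq> I\<close>
    proof (induction S rule: finite_ranking_induct[where f = \<kappa>])
      case empty
      have "cls {} g A a = A" for a unfolding cls_def by auto
      then show ?case using finA by (simp add: card_gt_0_iff)
    next
      case (insert x S)
      show ?case
      proof (cases "x \<in> S")
        case True
        then show ?thesis using insert by (simp add: insert_absorb)
      next
        case False
        have IH: "(\<Sum>a\<in>A. ln (real (card A) / real (card (cls S g A a))))
          \<le> (\<Sum>a\<in>A. \<Sum>i\<in>S. ln (real (card (g i ` br S \<kappa> g A i a))))"
          using insert by auto
        have lt: "\<kappa> j < \<kappa> x" if "j \<in> S" for j
        proof -
          have "\<kappa> j \<le> \<kappa> x" using insert(2) that by auto
          moreover have "\<kappa> j \<noteq> \<kappa> x" using inj insert(4) that False
            by (metis inj_on_contraD insert_subset subsetD)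
          ultimately show ?thesis by simp
        qed
        have clsI: "cls (insert x S) g A a = {b\<in>cls S g A a. g x b = g x a}" for a
          unfolding cls_def by auto
        have brS: "br (insert x S) \<kappa> g A i a = br S \<kappa> g A i a" if "i \<in> S" for i a
          unfolding br_def using insert(2)[OF that] by auto
        have brx: "br (insert x S) \<kappa> g A x a = cls S g A a" for a
          unfolding br_def cls_def using lt by auto
        have G: "(\<Sum>a\<in>A. ln (real (card (cls S g A a)) / real (card {b\<in>cls S g A a. g x b = g x a})))
           \<le> (\<Sum>a\<in>A. ln (real (card (g x ` cls S g A a))))"
          by (rule gibbs_step[OF finA]) (auto dest: cls_basic)
        have pos: "real (card {b\<in>cls S g A a. g x b = g x a}) > 0" "real (card (cls S g A a)) > 0"
          "real (card A) > 0" if "a \<in> A" for a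
        proof -
          have f: "finite (cls S g A a)" using cls_basic(2)[OF that] finA finite_subset by blast
          have "a \<in> {b\<in>cls S g A a. g x b = g x a}" using cls_basic(1)[OF that] by auto
          then show "real (card {b\<in>cls S g A a. g x b = g x a}) > 0" using f card_gt_0_iff by fastforce
          show "real (card (cls S g A a)) > 0" using cls_basic(1)[OF that] f card_gt_0_iff by fastforce
          show "real (card A) > 0" using that finA card_gt_0_iff by fastforce
        qed
        have split: "ln (real (card A) / real (card (cls (insert x S) g A a)))
          = ln (real (card A) / real (card (cls S g A a)))
            + ln (real (card (cls S g A a)) / real (card {b\<in>cls S g A a. g x b = g x a}))" if "a \<in> A" for a
          unfolding clsI using pos[OF that] by (simp add: ln_div)
        have "(\<Sum>a\<in>A. ln (real (card A) / real (card (cls (insert x S) g A a))))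
          = (\<Sum>a\<in>A. ln (real (card A) / real (card (cls S g A a))))
            + (\<Sum>a\<in>A. ln (real (card (cls S g A a)) / real (card {b\<in>cls S g A a. g x b = g x a})))"
          by (simp add: split sum.distrib)
        also have "\<dots> \<le> (\<Sum>a\<in>A. \<Sum>i\<in>S. ln (real (card (g i ` br S \<kappa> g A i a))))
            + (\<Sum>a\<in>A. ln (real (card (g x ` cls S g A a))))"
          using IH G by linarith
        also have "\<dots> = (\<Sum>a\<in>A. \<Sum>i\<in>insert x S. ln (real (card (g i ` br (insert x S) \<kappa> g A i a))))"
          using False insert(1) by (simp add: brS brx sum.distrib)
        finally show ?thesis .
      qed
    qed
  qed
  then show ?thesis by blast
qed



lemma pie_filter:
  assumes "finite V" "W \<subseteq> V"
  shows "{t\<in>PiE V F. \<forall>w\<in>W. \<alpha> \<le> t w} = PiE V (\<lambda>x. if x \<in> W then F x \<inter> {\<alpha>..} else F x)"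
  using assms by (auto simp: PiE_iff extensional_def split: if_splits)

lemma pie_ratio:
  fixes K :: nat and F :: "'a \<Rightarrow> nat set"
  assumes fin: "finite V" and WV: "W \<subseteq> V" and FW: "\<forall>x\<in>W. F x = {0..<K}" and aK: "\<alpha> \<le> K" and K: "0 < K"
  shows "real (card {t\<in>PiE V F. \<forall>w\<in>W. \<alpha> \<le> t w}) = real (card (PiE V F)) * (real (K - \<alpha>) / real K) ^ card W"
proof -
  have finW: "finite W" using fin WV finite_subset by blast
  let ?F2 = "\<lambda>x. if x \<in> W then F x \<inter> {\<alpha>..} else F x"
  have c1: "card (PiE V F) = (\<Prod>x\<in>V - W. card (F x)) * K ^ card W"
  proof -
    have "card (PiE V F) = (\<Prod>x\<in>V. card (F x))" by (rule card_PiE[OF fin])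
    also have "\<dots> = (\<Prod>x\<in>V - W. card (F x)) * (\<Prod>x\<in>W. card (F x))"
      by (rule prod.subset_diff[OF WV fin])
    also have "(\<Prod>x\<in>W. card (F x)) = (\<Prod>x\<in>W. K)" using FW by simp
    finally show ?thesis by simp
  qed
  have c2: "card {t\<in>PiE V F. \<forall>w\<in>W. \<alpha> \<le> t w} = (\<Prod>x\<in>V - W. card (F x)) * (K - \<alpha>) ^ card W"
  proof -
    have "card {t\<in>PiE V F. \<forall>w\<in>W. \<alpha> \<le> t w} = (\<Prod>x\<in>V. card (?F2 x))"
      unfolding pie_filter[OF fin WV] by (rule card_PiE[OF fin])
    also have "\<dots> = (\<Prod>x\<in>V - W. card (?F2 x)) * (\<Prod>x\<in>W. card (?F2 x))"
      by (rule prod.subset_diff[OF WV fin])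
    also have "(\<Prod>x\<in>V - W. card (?F2 x)) = (\<Prod>x\<in>V - W. card (F x))" by (rule prod.cong) auto
    also have "(\<Prod>x\<in>W. card (?F2 x)) = (\<Prod>x\<in>W. K - \<alpha>)"
    proof (rule prod.cong[OF refl])
      fix x assume "x \<in> W"
      then have "?F2 x = {\<alpha>..<K}" using FW by auto
      then show "card (?F2 x) = K - \<alpha>" by simp
    qed
    finally show ?thesis by simp
  qed
  show ?thesis unfolding c1 c2 using K aK by (simp add: power_divide of_nat_diff)
qed



definition tri :: "nat set set \<Rightarrow> nat \<Rightarrow> nat set" where
  "tri M u = (THE T. T \<in> M \<and> u \<in> T)"

locale sts =
  fixes n :: nat and S :: "nat set set"
  assumes sts: "steiner_triple_system n S"
begin

lemma S_sub: "T \<in> S \<Longrightarrow> T \<subseteq> {1..n}" and S_card: "T \<in> S \<Longrightarrow> card T = 3"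
  using sts unfolding steiner_triple_system_def by auto

lemma S_pairs: "\<forall>x\<in>{1..n}. \<forall>y\<in>{1..n}. x \<noteq> y \<longrightarrow> (\<exists>!e. e \<in> S \<and> {x, y} \<subseteq> e)"
  using sts unfolding steiner_triple_system_def by (elim conjE)

lemma S_uniq: "T1 \<in> S \<Longrightarrow> T2 \<in> S \<Longrightarrow> x \<in> T1 \<Longrightarrow> y \<in> T1 \<Longrightarrow> x \<in> T2 \<Longrightarrow> y \<in> T2 \<Longrightarrow> x \<noteq> y \<Longrightarrow> T1 = T2"
proof -
  assume a: "T1 \<in> S" "T2 \<in> S" "x \<in> T1" "y \<in> T1" "x \<in> T2" "y \<in> T2" "x \<noteq> y"
  then have xy: "x \<in> {1..n}" "y \<in> {1..n}" using S_sub[OF a(1)] by blast+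
  have ex: "\<exists>!e. e \<in> S \<and> {x, y} \<subseteq> e" using S_pairs xy a(7) by blast
  have "T1 \<in> S \<and> {x, y} \<subseteq> T1" "T2 \<in> S \<and> {x, y} \<subseteq> T2" using a by auto
  then show ?thesis using ex by (metis (no_types, lifting))
qed

lemma finite_S: "finite S"
proof -
  have "S \<subseteq> Pow {1..n}" using S_sub by auto
  then show ?thesis using finite_subset by blast
qed

lemma three_elems: assumes "T \<in> S" "v \<in> T" obtains x y where "T = {v, x, y}" "x \<noteq> v" "y \<noteq> v" "x \<noteq> y"
proof -
  have "card T = 3" using S_card assms by simp
  then obtain a b c where T: "T = {a, b, c}" "a \<noteq> b" "a \<noteq> c" "b \<noteq> c"
    by (auto simp: card_3_iff)
  show ?thesis
  proof (cases "v = a")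
    case True then show ?thesis using that[of b c] T by auto
  next
    case F1: False
    show ?thesis
    proof (cases "v = b")
      case True then show ?thesis using that[of a c] T by auto
    next
      case False
      then have "v = c" using F1 T assms(2) by auto
      then show ?thesis using that[of a b] T by auto
    qed
  qed
qed

lemma degree_bound: assumes "v \<in> {1..n}" shows "2 * card {T\<in>S. v \<in> T} \<le> n - 1"
proof -
  let ?Sv = "{T\<in>S. v \<in> T}"
  have fin: "finite ?Sv" using finite_S by simp
  have fins: "finite (T - {v})" if "T \<in> ?Sv" for T
  proof -
    have "T \<subseteq> {1..n}" using that S_sub by blast
    then show ?thesis using finite_subset by blast
  qed
  have c2: "card (T - {v}) = 2" if "T \<in> ?Sv" for T
  proof -
    have "card T = 3" "v \<in> T" "finite T" using that S_card fins[OF that] by auto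
    then show ?thesis by (simp add: card_Diff_singleton)
  qed
  have disj: "(T1 - {v}) \<inter> (T2 - {v}) = {}" if h: "T1 \<in> ?Sv" "T2 \<in> ?Sv" "T1 \<noteq> T2" for T1 T2
  proof (rule ccontr)
    assume "(T1 - {v}) \<inter> (T2 - {v}) \<noteq> {}"
    then obtain x where x: "x \<in> T1" "x \<in> T2" "x \<noteq> v" by blast
    have "T1 \<in> S" "T2 \<in> S" "v \<in> T1" "v \<in> T2" using h by auto
    then have "T1 = T2" using S_uniq[of T1 T2 v x] x by blast
    then show False using h(3) by blast
  qed
  have "card (\<Union>T\<in>?Sv. T - {v}) = (\<Sum>T\<in>?Sv. card (T - {v}))"
    by (rule card_UN_disjoint[OF fin]) (use fins disj in blast)+
  also have "\<dots> = (\<Sum>T\<in>?Sv. 2)" by (rule sum.cong) (use c2 in auto)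
  also have "\<dots> = 2 * card ?Sv" by simp
  finally have eq: "card (\<Union>T\<in>?Sv. T - {v}) = 2 * card ?Sv" .
  have "(\<Union>T\<in>?Sv. T - {v}) \<subseteq> {1..n} - {v}" using S_sub by blast
  then have "card (\<Union>T\<in>?Sv. T - {v}) \<le> card ({1..n} - {v})" by (intro card_mono) auto
  also have "\<dots> = n - 1" using assms by simp
  finally show ?thesis using eq by simp
qed

definition PM where "PM = {M. perfect_matching {1..n} S M}"

lemma finite_PM: "finite PM"
proof -
  have "PM \<subseteq> Pow S" unfolding PM_def perfect_matching_def by blast
  then show ?thesis using finite_S finite_subset by blast
qed

lemma tri_props:
  assumes "M \<in> PM" "u \<in> {1..n}"
  shows "tri M u \<in> M" "u \<in> tri M u" "\<And>T. T \<in> M \<Longrightarrow> u \<in> T \<Longrightarrow> T = tri M u"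
proof -
  have pmall: "M \<subseteq> S \<and> (\<forall>e\<in>M. \<forall>f\<in>M. e \<noteq> f \<longrightarrow> e \<inter> f = {}) \<and> \<Union>M = {1..n}"
    using assms(1) unfolding PM_def perfect_matching_def by simp
  note pm = conjunct1[OF pmall] conjunct1[OF conjunct2[OF pmall]] conjunct2[OF conjunct2[OF pmall]]
  have "u \<in> \<Union>M" unfolding pm(3) by (rule assms(2))
  then obtain T0 where T0: "T0 \<in> M" "u \<in> T0" by blast
  have uq: "T = T0" if "T \<in> M" "u \<in> T" for T
  proof (rule ccontr)
    assume "T \<noteq> T0"
    then have "T \<inter> T0 = {}" using pm(2) that(1) T0(1) by blast
    then show False using that(2) T0(2) by blast
  qed
  have "tri M u = T0" unfolding tri_def by (rule the_equality) (use T0 uq in blast)+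
  then show "tri M u \<in> M" "u \<in> tri M u" "\<And>T. T \<in> M \<Longrightarrow> u \<in> T \<Longrightarrow> T = tri M u"
    using T0 uq by blast+
qed

lemma PM_S: "M \<in> PM \<Longrightarrow> M \<subseteq> S" unfolding PM_def perfect_matching_def by blast

lemma PM_inj: assumes "M1 \<in> PM" "M2 \<in> PM" "\<forall>u\<in>{1..n}. tri M1 u = tri M2 u" shows "M1 = M2"
proof -
  have "M = tri M ` {1..n}" if "M \<in> PM" for M
  proof
    show "tri M ` {1..n} \<subseteq> M" using tri_props(1)[OF that] by auto
    show "M \<subseteq> tri M ` {1..n}"
    proof
      fix T assume "T \<in> M"
      then have "T \<in> S" using PM_S that by auto
      then have "T \<noteq> {}" using S_card by fastforce
      then obtain x where "x \<in> T" by auto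
      then have "x \<in> {1..n}" using S_sub[OF \<open>T \<in> S\<close>] by blast
      then show "T \<in> tri M ` {1..n}" using tri_props(3)[OF that _ \<open>T \<in> M\<close> \<open>x \<in> T\<close>] by auto
    qed
  qed
  then have "M1 = tri M1 ` {1..n}" "M2 = tri M2 ` {1..n}" using assms by blast+
  moreover have "tri M1 ` {1..n} = tri M2 ` {1..n}" by (rule image_cong) (use assms(3) in auto)
  ultimately show ?thesis by simp
qed

definition Wset where "Wset M v T = (\<Union>x\<in>T. tri M x) - tri M v"
definition first where "first (\<kappa>::nat\<Rightarrow>nat) M v \<longleftrightarrow> (\<forall>u\<in>tri M v. u \<noteq> v \<longrightarrow> \<kappa> v < \<kappa> u)"
definition avail where "avail \<kappa> M v = {T\<in>S. v \<in> T \<and> T \<noteq> tri M v \<and> (\<forall>w\<in>Wset M v T. (\<kappa>::nat\<Rightarrow>nat) v < \<kappa> w)}"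

lemma tri_in_S: "M \<in> PM \<Longrightarrow> u \<in> {1..n} \<Longrightarrow> tri M u \<in> S"
  using tri_props(1) PM_S by blast

lemma tri_sub: "M \<in> PM \<Longrightarrow> u \<in> {1..n} \<Longrightarrow> tri M u \<subseteq> {1..n}"
  using tri_in_S S_sub by blast

lemma tri_eq: "M \<in> PM \<Longrightarrow> u \<in> {1..n} \<Longrightarrow> w \<in> tri M u \<Longrightarrow> tri M w = tri M u"
  using tri_props tri_sub by (metis subsetD)

lemma img_bound:
  assumes M: "M \<in> PM" and v: "v \<in> {1..n}" and inj: "inj_on \<kappa> {1..n}"
  shows "card ((\<lambda>b. tri b v) ` {b\<in>PM. \<forall>u\<in>{1..n}. \<kappa> u < \<kappa> v \<longrightarrow> tri b u = tri M u})
     \<le> (if first \<kappa> M v then 1 + card (avail \<kappa> M v) else 1)"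
proof -
  let ?B = "{b\<in>PM. \<forall>u\<in>{1..n}. \<kappa> u < \<kappa> v \<longrightarrow> tri b u = tri M u}"
  let ?e = "tri M v"
  have finav: "finite (avail \<kappa> M v)" using finite_S unfolding avail_def by simp
  show ?thesis
  proof (cases "first \<kappa> M v")
    case False
    then obtain u where u: "u \<in> ?e" "u \<noteq> v" "\<not> \<kappa> v < \<kappa> u" unfolding first_def by auto
    have uV: "u \<in> {1..n}" using u(1) tri_sub[OF M v] by blast
    have "\<kappa> u \<noteq> \<kappa> v" using inj uV v u(2) by (meson inj_onD)
    then have lt: "\<kappa> u < \<kappa> v" using u(3) by simp
    have "(\<lambda>b. tri b v) ` ?B \<subseteq> {?e}"
    proof
      fix T assume "T \<in> (\<lambda>b. tri b v) ` ?B"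
      then obtain b where b: "b \<in> PM" "tri b u = tri M u" "T = tri b v" using lt uV by auto
      have "tri M u = ?e" using tri_eq[OF M v u(1)] .
      then have "v \<in> tri b u" using b(2) tri_props(2)[OF M v] by simp
      then have "tri b v = tri b u" using tri_eq[OF b(1) uV] by simp
      then show "T \<in> {?e}" using b \<open>tri M u = ?e\<close> by simp
    qed
    then have "card ((\<lambda>b. tri b v) ` ?B) \<le> card {?e}" by (intro card_mono) auto
    then show ?thesis using False by simp
  next
    case True
    have "(\<lambda>b. tri b v) ` ?B \<subseteq> insert ?e (avail \<kappa> M v)"
    proof
      fix T assume "T \<in> (\<lambda>b. tri b v) ` ?B"
      then obtain b where b: "b \<in> PM" "\<And>u. u \<in> {1..n} \<Longrightarrow> \<kappa> u < \<kappa> v \<Longrightarrow> tri b u = tri M u" "T = tri b v" by auto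
      show "T \<in> insert ?e (avail \<kappa> M v)"
      proof (cases "T = ?e")
        case True then show ?thesis by simp
      next
        case ne: False
        have TS: "T \<in> S" "v \<in> T" using b(3) tri_in_S[OF b(1) v] tri_props(2)[OF b(1) v] by auto
        have "\<kappa> v < \<kappa> w" if w: "w \<in> Wset M v T" for w
        proof (rule ccontr)
          assume "\<not> \<kappa> v < \<kappa> w"
          from w obtain x where x: "x \<in> T" "w \<in> tri M x" "w \<notin> ?e" unfolding Wset_def by auto
          have xV: "x \<in> {1..n}" using x(1) S_sub[OF TS(1)] by blast
          have wV: "w \<in> {1..n}" using x(2) tri_sub[OF M xV] by blast
          have "w \<noteq> v" using x(3) tri_props(2)[OF M v] by auto
          then have "\<kappa> w \<noteq> \<kappa> v" using inj wV v by (meson inj_onD)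
          then have "\<kappa> w < \<kappa> v" using \<open>\<not> \<kappa> v < \<kappa> w\<close> by simp
          then have bw: "tri b w = tri M w" using b(2) wV by simp
          have "tri M w = tri M x" using tri_eq[OF M xV x(2)] .
          then have "x \<in> tri b w" using bw tri_props(2)[OF M xV] by simp
          then have "tri b x = tri b w" using tri_eq[OF b(1) wV] by simp
          moreover have "tri b x = T" using tri_eq[OF b(1) v] x(1) b(3) by simp
          ultimately have "T = tri M x" using bw \<open>tri M w = tri M x\<close> by simp
          then have "v \<in> tri M x" using TS by simp
          then have "tri M v = tri M x" using tri_eq[OF M xV] by simp
          then show False using x(2,3) by simp
        qed
        then show ?thesis using TS ne unfolding avail_def by auto
      qed
    qed
    then have "card ((\<lambda>b. tri b v) ` ?B) \<le> card (insert ?e (avail \<kappa> M v))" by (intro card_mono) (use finav in auto)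
    also have "\<dots> \<le> 1 + card (avail \<kappa> M v)" using finav by (simp add: card_insert_if)
    finally show ?thesis using True by simp
  qed
qed

lemma Wset_props:
  assumes M: "M \<in> PM" and v: "v \<in> {1..n}" and T: "T \<in> S" "v \<in> T" "T \<noteq> tri M v"
  shows "Wset M v T \<subseteq> {1..n}" "6 \<le> card (Wset M v T)" "v \<notin> Wset M v T" "Wset M v T \<inter> tri M v = {}"
proof -
  have TV: "T \<subseteq> {1..n}" using S_sub T by auto
  show sub: "Wset M v T \<subseteq> {1..n}" unfolding Wset_def using tri_sub[OF M] TV by blast
  show "v \<notin> Wset M v T" "Wset M v T \<inter> tri M v = {}" unfolding Wset_def using tri_props(2)[OF M v] by auto
  obtain x y where xy: "T = {v, x, y}" "x \<noteq> v" "y \<noteq> v" "x \<noteq> y" using three_elems T by blast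
  have xV: "x \<in> {1..n}" and yV: "y \<in> {1..n}" using TV xy by auto
  have ex: "tri M x \<noteq> tri M v"
  proof
    assume "tri M x = tri M v"
    then have "x \<in> tri M v" using tri_props(2)[OF M xV] by simp
    then have "T = tri M v" using S_uniq[OF T(1) tri_in_S[OF M v], of v x] tri_props(2)[OF M v] xy T(2) by auto
    then show False using T(3) by simp
  qed
  have ey: "tri M y \<noteq> tri M v"
  proof
    assume "tri M y = tri M v"
    then have "y \<in> tri M v" using tri_props(2)[OF M yV] by simp
    then have "T = tri M v" using S_uniq[OF T(1) tri_in_S[OF M v], of v y] tri_props(2)[OF M v] xy T(2) by auto
    then show False using T(3) by simp
  qed
  have exy: "tri M x \<noteq> tri M y"
  proof
    assume h: "tri M x = tri M y"
    then have "y \<in> tri M x" using tri_props(2)[OF M yV] by simp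
    then have "T = tri M x" using S_uniq[OF T(1) tri_in_S[OF M xV], of x y] tri_props(2)[OF M xV] xy by auto
    then have "v \<in> tri M x" using T(2) by simp
    then have "tri M v = tri M x" using tri_eq[OF M xV] by simp
    then show False using ex by simp
  qed
  have pmd: "\<forall>e\<in>M. \<forall>f\<in>M. e \<noteq> f \<longrightarrow> e \<inter> f = {}" using M unfolding PM_def perfect_matching_def by auto
  have d1: "tri M x \<inter> tri M v = {}" "tri M y \<inter> tri M v = {}" "tri M x \<inter> tri M y = {}"
    using pmd tri_props(1)[OF M] xV yV v ex ey exy by blast+
  have "tri M x \<union> tri M y \<subseteq> Wset M v T" unfolding Wset_def using xy d1 by auto
  moreover have "card (tri M x \<union> tri M y) = 6"
  proof -
    have "card (tri M x) = 3" "card (tri M y) = 3" using S_card tri_in_S[OF M] xV yV by auto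
    moreover have "finite (tri M x)" "finite (tri M y)" using tri_sub[OF M] xV yV finite_subset by blast+
    ultimately show ?thesis using d1(3) by (simp add: card_Un_disjoint)
  qed
  moreover have "finite (Wset M v T)" using sub finite_subset by blast
  ultimately show "6 \<le> card (Wset M v T)" by (metis card_mono)
qed

lemma avail_card:
  assumes M: "M \<in> PM" and v: "v \<in> {1..n}"
  shows "2 * card {T\<in>S. v \<in> T \<and> T \<noteq> tri M v} + 3 \<le> n"
proof -
  have "{T\<in>S. v \<in> T} = insert (tri M v) {T\<in>S. v \<in> T \<and> T \<noteq> tri M v}"
    using tri_in_S[OF M v] tri_props(2)[OF M v] by auto
  then have "card {T\<in>S. v \<in> T} = 1 + card {T\<in>S. v \<in> T \<and> T \<noteq> tri M v}"
    using finite_S by simp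
  moreover have "3 \<le> n"
  proof -
    have "tri M v \<subseteq> {1..n}" "card (tri M v) = 3" using tri_sub[OF M v] S_card tri_in_S[OF M v] by auto
    then show ?thesis by (metis card_atLeastAtMost card_mono diff_Suc_1 finite_atLeastAtMost)
  qed
  ultimately show ?thesis using degree_bound[OF v] by simp
qed

end


lemma jensen_ln:
  assumes fin: "finite G" and pos: "\<forall>t\<in>G. f t > 0" and m: "m > 0"
    and sm: "(\<Sum>t\<in>G. f t) \<le> real (card G) * m"
  shows "(\<Sum>t\<in>G. ln (f t)) \<le> real (card G) * ln m"
proof -
  have "ln (f t) \<le> ln m + f t / m - 1" if "t \<in> G" for t
  proof -
    have "ln (f t / m) \<le> f t / m - 1" using pos that m by (intro ln_le_minus_one) auto
    moreover have "ln (f t / m) = ln (f t) - ln m" using pos that m by (intro ln_divide_pos) auto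
    ultimately show ?thesis by simp
  qed
  then have "(\<Sum>t\<in>G. ln (f t)) \<le> (\<Sum>t\<in>G. ln m + f t / m - 1)" by (rule sum_mono)
  also have "\<dots> = real (card G) * ln m + (\<Sum>t\<in>G. f t) / m - real (card G)"
    by (simp add: sum.distrib sum_subtractf sum_divide_distrib)
  also have "\<dots> \<le> real (card G) * ln m" using sm m by (simp add: field_simps)
  finally show ?thesis .
qed

context sts
begin

definition TT :: "nat \<Rightarrow> (nat \<Rightarrow> nat) set" where "TT K = PiE {1..n} (\<lambda>_. {0..<K})"
definition kap :: "(nat \<Rightarrow> nat) \<Rightarrow> nat \<Rightarrow> nat" where "kap t u = t u * (n + 1) + u"

lemma kap_inj: "inj_on (kap t) {1..n}"
proof (rule inj_onI)
  fix u w assume h: "u \<in> {1..n}" "w \<in> {1..n}" "kap t u = kap t w"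
  have "(t u * (n + 1) + u) mod (n+1) = u" using h(1) by (simp only: mod_mult_self3) simp
  moreover have "(t w * (n + 1) + w) mod (n+1) = w" using h(2) by (simp only: mod_mult_self3) simp
  ultimately show "u = w" using h(3) unfolding kap_def by metis
qed

lemma kap_le: assumes "u \<in> {1..n}" "w \<in> {1..n}" "kap t u < kap t w" shows "t u \<le> t w"
proof (rule ccontr)
  assume "\<not> t u \<le> t w"
  then have "Suc (t w) \<le> t u" by simp
  then have "Suc (t w) * (n+1) \<le> t u * (n+1)" by (rule mult_le_mono1)
  then show False using assms unfolding kap_def by simp
qed

lemma F_sub: assumes "x \<le> n" "v \<le> n" "\<alpha> * (n+1) + v < y * (n+1) + x" shows "\<alpha> \<le> y"
proof (rule ccontr)
  assume "\<not> \<alpha> \<le> y"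
  then have "Suc y \<le> \<alpha>" by simp
  then have "Suc y * (n+1) \<le> \<alpha> * (n+1)" by (rule mult_le_mono1)
  then show False using assms by simp
qed

definition Fa where "Fa K M v \<alpha> x = (if x = v then {\<alpha>} else if x \<in> tri M v then {y. y < K \<and> \<alpha> * (n+1) + v < y * (n+1) + x} else {0..<K})"

lemma G_eq:
  assumes M: "M \<in> PM" and v: "v \<in> {1..n}" and aK: "\<alpha> < K"
  shows "{t\<in>{t\<in>TT K. first (kap t) M v}. t v = \<alpha>} = PiE {1..n} (Fa K M v \<alpha>)"
proof -
  have e: "tri M v \<subseteq> {1..n}" "v \<in> tri M v" using tri_sub[OF M v] tri_props(2)[OF M v] by auto
  show ?thesis
  proof (intro set_eqI iffI)
    fix t assume "t \<in> {t\<in>{t\<in>TT K. first (kap t) M v}. t v = \<alpha>}"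
    then have t: "t \<in> PiE {1..n} (\<lambda>_. {0..<K})" "first (kap t) M v" "t v = \<alpha>" unfolding TT_def by auto
    show "t \<in> PiE {1..n} (Fa K M v \<alpha>)"
    proof (rule PiE_I)
      fix x assume x: "x \<in> {1..n}"
      have tx: "t x < K" using t(1) x by auto
      show "t x \<in> Fa K M v \<alpha> x"
      proof (cases "x = v")
        case True then show ?thesis unfolding Fa_def using t(3) by simp
      next
        case False
        then show ?thesis unfolding Fa_def using t(2,3) tx unfolding first_def kap_def by auto
      qed
    next
      fix x assume "x \<notin> {1..n}" then show "t x = undefined" using t(1) by auto
    qed
  next
    fix t assume t: "t \<in> PiE {1..n} (Fa K M v \<alpha>)"
    have "t v \<in> Fa K M v \<alpha> v" using PiE_mem[OF t v] .
    then have tv: "t v = \<alpha>" unfolding Fa_def by simp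
    have tT: "t \<in> TT K" unfolding TT_def
    proof (rule PiE_I)
      fix x assume x: "x \<in> {1..n}"
      then have "t x \<in> Fa K M v \<alpha> x" using t by auto
      then show "t x \<in> {0..<K}" unfolding Fa_def using aK by (auto split: if_splits)
    next
      fix x assume "x \<notin> {1..n}" then show "t x = undefined" using t by auto
    qed
    have "first (kap t) M v" unfolding first_def
    proof (intro ballI impI)
      fix u assume u: "u \<in> tri M v" "u \<noteq> v"
      then have "u \<in> {1..n}" using e by auto
      then have "t u \<in> Fa K M v \<alpha> u" using t by auto
      then show "kap t v < kap t u" unfolding Fa_def kap_def using u tv by simp
    qed
    then show "t \<in> {t\<in>{t\<in>TT K. first (kap t) M v}. t v = \<alpha>}" using tT tv by simp
  qed
qed

lemma G_card:
  assumes M: "M \<in> PM" and v: "v \<in> {1..n}" and aK: "\<alpha> < K"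
  shows "card (PiE {1..n} (Fa K M v \<alpha>)) \<le> (K - \<alpha>)^2 * K^(n-3)"
proof -
  let ?e = "tri M v"
  have e: "?e \<subseteq> {1..n}" "v \<in> ?e" "card ?e = 3" using tri_sub[OF M v] tri_props(2)[OF M v] S_card tri_in_S[OF M v] by auto
  have fe: "finite ?e" using e(1) finite_subset by blast
  define h where "h x = (if x = v then 1 else if x \<in> ?e then K - \<alpha> else K)" for x
  have "card (PiE {1..n} (Fa K M v \<alpha>)) = (\<Prod>x\<in>{1..n}. card (Fa K M v \<alpha> x))" by (rule card_PiE) simp
  also have "\<dots> \<le> (\<Prod>x\<in>{1..n}. h x)"
  proof (rule prod_mono)
    fix x assume x: "x \<in> {1..n}"
    show "0 \<le> card (Fa K M v \<alpha> x) \<and> card (Fa K M v \<alpha> x) \<le> h x"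
    proof (cases "x = v")
      case True then show ?thesis unfolding Fa_def h_def by simp
    next
      case F: False
      show ?thesis
      proof (cases "x \<in> ?e")
        case True
        have "{y. y < K \<and> \<alpha> * (n+1) + v < y * (n+1) + x} \<subseteq> {\<alpha>..<K}"
          using F_sub[of x v \<alpha>] x v by auto
        then have "card {y. y < K \<and> \<alpha> * (n+1) + v < y * (n+1) + x} \<le> card {\<alpha>..<K}"
          by (intro card_mono) auto
        then show ?thesis unfolding Fa_def h_def using F True by simp
      next
        case False then show ?thesis unfolding Fa_def h_def using F by simp
      qed
    qed
  qed
  also have "(\<Prod>x\<in>{1..n}. h x) = (\<Prod>x\<in>{1..n} - ?e. h x) * (\<Prod>x\<in>?e. h x)"
    by (rule prod.subset_diff[OF e(1)]) simp
  also have "(\<Prod>x\<in>{1..n} - ?e. h x) = (\<Prod>x\<in>{1..n} - ?e. K)"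
    by (rule prod.cong) (use e(2) in \<open>auto simp: h_def\<close>)
  also have "\<dots> = K ^ (n - 3)" using e by (simp add: card_Diff_subset fe)
  also have "(\<Prod>x\<in>?e. h x) = h v * (\<Prod>x\<in>?e - {v}. h x)" using e(2) fe by (simp add: prod.remove)
  also have "(\<Prod>x\<in>?e - {v}. h x) = (\<Prod>x\<in>?e - {v}. K - \<alpha>)"
    by (rule prod.cong) (auto simp: h_def)
  also have "\<dots> = (K - \<alpha>) ^ 2" using e fe by simp
  finally have "card (PiE {1..n} (Fa K M v \<alpha>)) \<le> K ^ (n - 3) * (h v * (K - \<alpha>) ^ 2)" .
  moreover have "h v = 1" by (simp add: h_def)
  ultimately show ?thesis by (simp add: mult.commute)
qed

lemma avail_eq: "avail \<kappa> M v = {T\<in>{T\<in>S. v \<in> T \<and> T \<noteq> tri M v}. \<forall>w\<in>Wset M v T. \<kappa> v < \<kappa> w}"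
  unfolding avail_def by blast

lemma card_filter_sum: "finite A \<Longrightarrow> real (card {x\<in>A. P x}) = (\<Sum>x\<in>A. if P x then 1 else 0)"
  by (simp add: sum.inter_filter[symmetric])

lemma G_sum:
  assumes M: "M \<in> PM" and v: "v \<in> {1..n}" and aK: "\<alpha> < K"
  shows "(\<Sum>t\<in>PiE {1..n} (Fa K M v \<alpha>). 1 + real (card (avail (kap t) M v)))
    \<le> real (card (PiE {1..n} (Fa K M v \<alpha>))) *
       (1 + real (card {T\<in>S. v \<in> T \<and> T \<noteq> tri M v}) * (real (K - \<alpha>) / real K) ^ 6)"
proof -
  let ?G = "PiE {1..n} (Fa K M v \<alpha>)"
  let ?Sv = "{T\<in>S. v \<in> T \<and> T \<noteq> tri M v}"
  let ?u = "real (K - \<alpha>) / real K"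
  let ?P = "\<lambda>t T. \<forall>w\<in>Wset M v T. kap t v < kap t w"
  have finG: "finite ?G" by (rule finite_PiE) (auto simp: Fa_def)
  have finSv: "finite ?Sv" using finite_S by simp
  have u01: "0 \<le> ?u" "?u \<le> 1" using aK by auto
  have o1: "(\<Sum>t\<in>?G. 1 + real (card (avail (kap t) M v))) = real (card ?G) + (\<Sum>t\<in>?G. \<Sum>T\<in>?Sv. if ?P t T then 1 else 0)"
  proof -
    have "real (card (avail (kap t) M v)) = (\<Sum>T\<in>?Sv. if ?P t T then 1 else 0)" for t
      unfolding avail_eq by (rule card_filter_sum[OF finSv])
    then show ?thesis by (simp add: sum.distrib)
  qed
  have o2: "(\<Sum>t\<in>?G. \<Sum>T\<in>?Sv. if ?P t T then 1 else (0::real)) = (\<Sum>T\<in>?Sv. \<Sum>t\<in>?G. if ?P t T then 1 else 0)"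
    by (rule sum.swap)
  have o3: "(\<Sum>T\<in>?Sv. \<Sum>t\<in>?G. if ?P t T then 1 else (0::real)) \<le> (\<Sum>T\<in>?Sv. real (card ?G) * ?u ^ 6)"
  proof (rule sum_mono)
    fix T assume T: "T \<in> ?Sv"
    have W: "Wset M v T \<subseteq> {1..n}" "6 \<le> card (Wset M v T)" "v \<notin> Wset M v T" "Wset M v T \<inter> tri M v = {}"
      using Wset_props[OF M v] T by simp_all
    have s1: "(\<Sum>t\<in>?G. if ?P t T then 1 else (0::real)) = real (card {t\<in>?G. ?P t T})"
      by (rule card_filter_sum[OF finG, symmetric])
    have s2: "real (card {t\<in>?G. ?P t T}) \<le> real (card {t\<in>?G. \<forall>w\<in>Wset M v T. \<alpha> \<le> t w})"
    proof -
      have "{t\<in>?G. ?P t T} \<subseteq> {t\<in>?G. \<forall>w\<in>Wset M v T. \<alpha> \<le> t w}"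
      proof (intro subsetI, elim CollectE conjE, intro CollectI conjI ballI)
        fix t w assume t: "t \<in> ?G" "?P t T" and w: "w \<in> Wset M v T"
        have "t v \<in> Fa K M v \<alpha> v" using PiE_mem[OF t(1) v] .
        then have "t v = \<alpha>" unfolding Fa_def by simp
        moreover have "t v \<le> t w" using kap_le[OF v, of w t] W(1) w t(2) by blast
        ultimately show "\<alpha> \<le> t w" by simp
      qed
      then show ?thesis by (intro of_nat_mono card_mono) (use finG in auto)
    qed
    have s3: "real (card {t\<in>?G. \<forall>w\<in>Wset M v T. \<alpha> \<le> t w}) = real (card ?G) * ?u ^ card (Wset M v T)"
    proof -
      have FW: "\<forall>x\<in>Wset M v T. Fa K M v \<alpha> x = {0..<K}"
        using W(3,4) unfolding Fa_def by auto
      have K0: "0 < K" using aK by simp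
      show ?thesis by (rule pie_ratio[OF _ W(1) FW _ K0]) (use aK in simp_all)
    qed
    have s4: "real (card ?G) * ?u ^ card (Wset M v T) \<le> real (card ?G) * ?u ^ 6"
      by (intro mult_left_mono power_decreasing) (use W u01 in auto)
    show "(\<Sum>t\<in>?G. if ?P t T then 1 else (0::real)) \<le> real (card ?G) * ?u ^ 6"
      unfolding s1 using s2 s3 s4 by linarith
  qed
  have o4: "(\<Sum>T\<in>?Sv. real (card ?G) * ?u ^ 6) = real (card ?Sv) * real (card ?G) * ?u ^ 6" by simp
  have "(\<Sum>t\<in>?G. 1 + real (card (avail (kap t) M v))) \<le> real (card ?G) + real (card ?Sv) * real (card ?G) * ?u ^ 6"
    using o1 o2 o3 o4 by linarith
  then show ?thesis by (simp add: algebra_simps)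
qed

lemma mv_bound:
  assumes M: "M \<in> PM" and v: "v \<in> {1..n}" and K: "0 < K"
  shows "(\<Sum>t\<in>TT K. if first (kap t) M v then ln (1 + real (card (avail (kap t) M v))) else 0)
    \<le> (\<Sum>\<alpha><K. real ((K - \<alpha>)^2 * K^(n-3)) *
          ln (1 + real (card {T\<in>S. v \<in> T \<and> T \<noteq> tri M v}) * (real (K - \<alpha>) / real K) ^ 6))"
proof -
  let ?c = "real (card {T\<in>S. v \<in> T \<and> T \<noteq> tri M v})"
  let ?f = "\<lambda>t. ln (1 + real (card (avail (kap t) M v)))"
  let ?TF = "{t\<in>TT K. first (kap t) M v}"
  have finTT: "finite (TT K)" unfolding TT_def by (rule finite_PiE) auto
  have finTF: "finite ?TF" using finTT by simp
  have e1: "(\<Sum>t\<in>TT K. if first (kap t) M v then ?f t else 0) = (\<Sum>t\<in>?TF. ?f t)"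
    by (rule sum.inter_filter[OF finTT, symmetric])
  have img: "(\<lambda>t. t v) ` ?TF \<subseteq> {..<K}" using v unfolding TT_def by auto
  have e2: "(\<Sum>t\<in>?TF. ?f t) = (\<Sum>\<alpha><K. \<Sum>t\<in>{t\<in>?TF. t v = \<alpha>}. ?f t)"
    by (rule sum.group[OF finTF finite_lessThan img, symmetric])
  have e3: "(\<Sum>t\<in>{t\<in>?TF. t v = \<alpha>}. ?f t)
      \<le> real ((K - \<alpha>)^2 * K^(n-3)) * ln (1 + ?c * (real (K - \<alpha>) / real K) ^ 6)" if a: "\<alpha> \<in> {..<K}" for \<alpha>
  proof -
    have aK: "\<alpha> < K" using a by simp
    let ?G = "PiE {1..n} (Fa K M v \<alpha>)"
    let ?m = "1 + ?c * (real (K - \<alpha>) / real K) ^ 6"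
    have m0: "?m \<ge> 1" by simp
    have mp: "?m > 0" using m0 by linarith
    have finG: "finite ?G" by (rule finite_PiE) (auto simp: Fa_def)
    have "(\<Sum>t\<in>?G. ln (1 + real (card (avail (kap t) M v)))) \<le> real (card ?G) * ln ?m"
      by (rule jensen_ln[OF finG _ mp G_sum[OF M v aK]]) (auto simp: add_pos_nonneg)
    also have "\<dots> \<le> real ((K - \<alpha>)^2 * K^(n-3)) * ln ?m"
    proof (rule mult_right_mono)
      show "real (card ?G) \<le> real ((K - \<alpha>)^2 * K^(n-3))" using G_card[OF M v aK] by (rule of_nat_mono)
    qed (use m0 in simp)
    finally show ?thesis unfolding G_eq[OF M v aK] .
  qed
  have "(\<Sum>\<alpha><K. \<Sum>t\<in>{t\<in>?TF. t v = \<alpha>}. ?f t)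
     \<le> (\<Sum>\<alpha><K. real ((K - \<alpha>)^2 * K^(n-3)) * ln (1 + ?c * (real (K - \<alpha>) / real K) ^ 6))"
    by (rule sum_mono) (rule e3)
  then show ?thesis using e1 e2 by simp
qed

lemma ln_card_mono: "x \<le> y \<Longrightarrow> ln (real x) \<le> ln (real y)"
proof (cases "x = 0")
  case True
  then show ?thesis by (cases "y = 0") auto
next
  case False
  assume "x \<le> y"
  then show ?thesis using False by (intro ln_mono) auto
qed

lemma cls_single:
  assumes "M \<in> PM"
  shows "cls {1..n} (\<lambda>u M. tri M u) PM M = {M}"
  using PM_inj assms unfolding cls_def by blast

lemma chain_t:
  assumes ne: "PM \<noteq> {}"
  shows "real (card PM) * ln (real (card PM))
     \<le> (\<Sum>M\<in>PM. \<Sum>v\<in>{1..n}. if first (kap t) M v then ln (1 + real (card (avail (kap t) M v))) else 0)"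
proof -
  have C: "(\<Sum>a\<in>PM. ln (real (card PM) / real (card (cls {1..n} (\<lambda>u M. tri M u) PM a))))
      \<le> (\<Sum>a\<in>PM. \<Sum>i\<in>{1..n}. ln (real (card ((\<lambda>u M. tri M u) i ` br {1..n} (kap t) (\<lambda>u M. tri M u) PM i a))))"
    by (rule chain_gen[OF finite_PM finite_atLeastAtMost kap_inj])
  have L: "(\<Sum>a\<in>PM. ln (real (card PM) / real (card (cls {1..n} (\<lambda>u M. tri M u) PM a))))
     = real (card PM) * ln (real (card PM))"
  proof -
    have "(\<Sum>a\<in>PM. ln (real (card PM) / real (card (cls {1..n} (\<lambda>u M. tri M u) PM a))))
       = (\<Sum>a\<in>PM. ln (real (card PM)))"
      by (rule sum.cong[OF refl]) (simp only: cls_single, simp)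
    then show ?thesis by simp
  qed
  have R: "ln (real (card ((\<lambda>u M. tri M u) i ` br {1..n} (kap t) (\<lambda>u M. tri M u) PM i a)))
     \<le> (if first (kap t) a i then ln (1 + real (card (avail (kap t) a i))) else 0)"
    if a: "a \<in> PM" and i: "i \<in> {1..n}" for a i
  proof -
    have "card ((\<lambda>u M. tri M u) i ` br {1..n} (kap t) (\<lambda>u M. tri M u) PM i a)
        \<le> (if first (kap t) a i then 1 + card (avail (kap t) a i) else 1)"
      unfolding br_def using img_bound[OF a i kap_inj] by simp
    then have "ln (real (card ((\<lambda>u M. tri M u) i ` br {1..n} (kap t) (\<lambda>u M. tri M u) PM i a)))
        \<le> ln (real (if first (kap t) a i then 1 + card (avail (kap t) a i) else 1))"
      by (rule ln_card_mono)
    then show ?thesis by (simp split: if_splits)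
  qed
  have "(\<Sum>a\<in>PM. \<Sum>i\<in>{1..n}. ln (real (card ((\<lambda>u M. tri M u) i ` br {1..n} (kap t) (\<lambda>u M. tri M u) PM i a))))
     \<le> (\<Sum>M\<in>PM. \<Sum>v\<in>{1..n}. if first (kap t) M v then ln (1 + real (card (avail (kap t) M v))) else 0)"
    by (intro sum_mono R) auto
  then show ?thesis using C L by linarith
qed

lemma n_ge3: assumes "PM \<noteq> {}" "1 \<le> n" shows "3 \<le> n"
proof -
  obtain M where M: "M \<in> PM" using assms by blast
  show ?thesis using avail_card[OF M, of 1] assms(2) by simp
qed

lemma PM_bound:
  assumes ne: "PM \<noteq> {}" and K: "0 < K"
  shows "real K ^ n * (real (card PM) * ln (real (card PM)))
    \<le> real (card PM) * real n * (\<Sum>\<alpha><K. real ((K - \<alpha>)^2 * K^(n-3)) *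
          ln (1 + real n / 2 * (real (K - \<alpha>) / real K) ^ 6))"
proof -
  let ?B = "(\<Sum>\<alpha><K. real ((K - \<alpha>)^2 * K^(n-3)) * ln (1 + real n / 2 * (real (K - \<alpha>) / real K) ^ 6))"
  let ?F = "\<lambda>t M v. if first (kap t) M v then ln (1 + real (card (avail (kap t) M v))) else 0"
  have finTT: "finite (TT K)" unfolding TT_def by (rule finite_PiE) auto
  have cTT: "card (TT K) = K ^ n" unfolding TT_def by (simp add: card_PiE)
  have s1: "real K ^ n * (real (card PM) * ln (real (card PM))) = (\<Sum>t\<in>TT K. real (card PM) * ln (real (card PM)))"
    using cTT by simp
  have s2: "(\<Sum>t\<in>TT K. real (card PM) * ln (real (card PM))) \<le> (\<Sum>t\<in>TT K. \<Sum>M\<in>PM. \<Sum>v\<in>{1..n}. ?F t M v)"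
    by (rule sum_mono) (rule chain_t[OF ne])
  have s3: "(\<Sum>t\<in>TT K. \<Sum>M\<in>PM. \<Sum>v\<in>{1..n}. ?F t M v) = (\<Sum>M\<in>PM. \<Sum>v\<in>{1..n}. \<Sum>t\<in>TT K. ?F t M v)"
  proof -
    have "(\<Sum>t\<in>TT K. \<Sum>M\<in>PM. \<Sum>v\<in>{1..n}. ?F t M v) = (\<Sum>M\<in>PM. \<Sum>t\<in>TT K. \<Sum>v\<in>{1..n}. ?F t M v)"
      by (rule sum.swap)
    also have "\<dots> = (\<Sum>M\<in>PM. \<Sum>v\<in>{1..n}. \<Sum>t\<in>TT K. ?F t M v)"
      by (rule sum.cong[OF refl]) (rule sum.swap)
    finally show ?thesis .
  qed
  have s4: "(\<Sum>t\<in>TT K. ?F t M v) \<le> ?B" if M: "M \<in> PM" and v: "v \<in> {1..n}" for M v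
  proof -
    let ?c = "real (card {T\<in>S. v \<in> T \<and> T \<noteq> tri M v})"
    have c: "?c \<le> real n / 2" using avail_card[OF M v] by simp
    have "(\<Sum>t\<in>TT K. ?F t M v) \<le> (\<Sum>\<alpha><K. real ((K - \<alpha>)^2 * K^(n-3)) * ln (1 + ?c * (real (K - \<alpha>) / real K) ^ 6))"
      by (rule mv_bound[OF M v K])
    also have "\<dots> \<le> ?B"
    proof (rule sum_mono)
      fix \<alpha> assume "\<alpha> \<in> {..<K}"
      have u: "0 \<le> (real (K - \<alpha>) / real K) ^ 6" by simp
      have "ln (1 + ?c * (real (K - \<alpha>) / real K) ^ 6) \<le> ln (1 + real n / 2 * (real (K - \<alpha>) / real K) ^ 6)"
        by (rule ln_mono) (use mult_right_mono[OF c u] in \<open>auto intro: add_pos_nonneg\<close>)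
      then show "real ((K - \<alpha>)^2 * K^(n-3)) * ln (1 + ?c * (real (K - \<alpha>) / real K) ^ 6)
         \<le> real ((K - \<alpha>)^2 * K^(n-3)) * ln (1 + real n / 2 * (real (K - \<alpha>) / real K) ^ 6)"
        by (rule mult_left_mono) simp
    qed
    finally show ?thesis .
  qed
  have s5: "(\<Sum>M\<in>PM. \<Sum>v\<in>{1..n}. \<Sum>t\<in>TT K. ?F t M v) \<le> (\<Sum>M\<in>PM. \<Sum>v\<in>{1..n}. ?B)"
    by (intro sum_mono s4)
  have s6: "(\<Sum>M\<in>PM. \<Sum>v\<in>{1..n}. ?B) = real (card PM) * real n * ?B" by simp
  show ?thesis using s1 s2 s3 s5 s6 by linarith
qed

lemma ln_PM_bound:
  assumes ne: "PM \<noteq> {}" and n1: "1 \<le> n"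
  shows "ln (real (card PM)) \<le> (\<Sum>\<alpha><n. (real (n - \<alpha>) / real n)^2 * ln (1 + real n / 2 * (real (n - \<alpha>) / real n) ^ 6))"
proof -
  have n3: "3 \<le> n" by (rule n_ge3[OF ne n1])
  then obtain m where m: "n = m + 3" by (metis add.commute le_Suc_ex)
  have P: "real (card PM) > 0" using ne finite_PM card_gt_0_iff by fastforce
  have nP: "real n ^ n > 0" using n1 by simp
  have B: "real n ^ n * (real (card PM) * ln (real (card PM)))
    \<le> real (card PM) * real n * (\<Sum>\<alpha><n. real ((n - \<alpha>)^2 * n^(n-3)) *
          ln (1 + real n / 2 * (real (n - \<alpha>) / real n) ^ 6))"
    using PM_bound[OF ne, of n] n1 by simp
  have key: "real n * (real ((n - \<alpha>)^2 * n^(n-3)) * X) = real n ^ n * ((real (n - \<alpha>) / real n)^2 * X)" for \<alpha> X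
  proof -
    have e1: "real n ^ n = real n ^ (n-3) * real n ^ 3" unfolding m by (simp add: power_add)
    have e2: "real ((n - \<alpha>)^2 * n^(n-3)) = real (n - \<alpha>) ^ 2 * real n ^ (n-3)" by simp
    have g: "N * (a^2 * q * X) = q * N^3 * ((a / N)^2 * X)" if "N > 0" for N a q X :: real
      using that by (simp add: field_simps power2_eq_square power3_eq_cube)
    show ?thesis unfolding e1 e2 by (rule g) (use n1 in simp)
  qed
  define S1 where "S1 = (\<Sum>\<alpha><n. real ((n - \<alpha>)^2 * n^(n-3)) * ln (1 + real n / 2 * (real (n - \<alpha>) / real n) ^ 6))"
  define S2 where "S2 = (\<Sum>\<alpha><n. (real (n - \<alpha>) / real n)^2 * ln (1 + real n / 2 * (real (n - \<alpha>) / real n) ^ 6))"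
  have eq: "real n * S1 = real n ^ n * S2"
    unfolding S1_def S2_def sum_distrib_left by (rule sum.cong[OF refl]) (rule key)
  have B': "real n ^ n * (real (card PM) * ln (real (card PM))) \<le> real (card PM) * (real n * S1)"
    using B unfolding S1_def by (simp only: mult.assoc)
  also have "\<dots> = real n ^ n * (real (card PM) * S2)" unfolding eq by (simp only: mult.left_commute)
  finally have "real (card PM) * ln (real (card PM)) \<le> real (card PM) * S2"
    using nP by (simp only: mult_le_cancel_left_pos)
  then show ?thesis unfolding S2_def using P by (simp only: mult_le_cancel_left_pos)
qed

end



definition GG :: "real \<Rightarrow> real" where "GG x = x^3 * ln x / 3 - x^3 / 9"

lemma GG_step:
  assumes j: "1 \<le> j"
  shows "j^2 * ln j \<le> GG (j + 1) - GG j"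
proof -
  define H where "H x = GG x - x * (j^2 * ln j)" for x
  have "H j \<le> H (j + 1)"
  proof (rule DERIV_nonneg_imp_nondecreasing[of j "j+1" H])
    fix x assume x1: "j \<le> x" and x2: "x \<le> j + 1"
    have x: "j \<le> x \<and> x \<le> j + 1" using x1 x2 by simp
    then have x0: "x > 0" using j by simp
    have "(H has_real_derivative (x^2 * ln x - j^2 * ln j)) (at x)"
      unfolding H_def GG_def
      by (rule derivative_eq_intros refl | use x0 in \<open>simp add: field_simps power2_eq_square power3_eq_cube\<close>)+
    moreover have "j^2 * ln j \<le> x^2 * ln x"
    proof (rule mult_mono)
      show "j^2 \<le> x^2" using x j by (intro power_mono) auto
      show "ln j \<le> ln x" using x j by simp
    qed (use x j in auto)
    ultimately show "\<exists>y. (H has_real_derivative y) (at x) \<and> 0 \<le> y" by auto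
  qed simp
  then show ?thesis unfolding H_def by (simp add: algebra_simps)
qed

lemma sum_sq: "(\<Sum>j=1..n. real j ^ 2) = real n * (real n + 1) * (2 * real n + 1) / 6"
  by (induction n) (simp_all add: field_simps power2_eq_square)

lemma sum_sqln: "(\<Sum>j=1..n. real j ^ 2 * ln (real j)) \<le> GG (real n + 1) - GG 1"
proof (induction n)
  case 0 then show ?case by simp
next
  case (Suc n)
  have "real (Suc n) ^ 2 * ln (real (Suc n)) \<le> GG (real (Suc n) + 1) - GG (real (Suc n))"
    by (rule GG_step) simp
  then show ?case using Suc by (simp add: add.commute)
qed

lemma xlnx: fixes x :: real assumes "0 < x" shows "x^2 * ln x \<ge> -x"
proof -
  have "ln (1/x) \<le> 1/x - 1" using assms by (intro ln_le_minus_one) simp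
  then have "ln x \<ge> 1 - 1/x" using assms by (simp add: ln_div)
  then have "x^2 * ln x \<ge> x^2 * (1 - 1/x)" using assms by (intro mult_left_mono) auto
  also have "x^2 * (1 - 1/x) = x^2 - x" using assms by (simp add: field_simps power2_eq_square)
  finally show ?thesis using assms by (smt (verit) zero_le_power2)
qed

lemma pt_bound:
  fixes x c \<epsilon> :: real
  assumes x: "0 < x" "x \<le> 1" and c: "0 < c" and e: "0 < \<epsilon>" "\<epsilon> \<le> 1"
  shows "x^2 * ln (1 + c * x^6) \<le> x^2 * ln c + 6 * (x^2 * ln x) + (6 * \<epsilon> + 1 / c + 1 / (c * \<epsilon>^6))"
proof (cases "\<epsilon> \<le> x")
  case True
  have cx: "c * x^6 > 0" using c x by simp
  have "1 + c * x^6 = (c * x^6) * (1 + 1 / (c * x^6))" using c x by (simp add: field_simps)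
  moreover have "(1 + 1 / (c * x^6)) > 0" using cx by (simp add: add_pos_pos)
  ultimately have "ln (1 + c * x^6) = ln c + 6 * ln x + ln (1 + 1 / (c * x^6))"
    using cx c x by (simp add: ln_mult ln_realpow)
  also have "ln (1 + 1 / (c * x^6)) \<le> 1 / (c * x^6)" using cx by (intro ln_add_one_self_le_self) simp
  finally have l: "ln (1 + c * x^6) \<le> ln c + 6 * ln x + 1 / (c * x^6)" by simp
  have "x^2 * ln (1 + c * x^6) \<le> x^2 * (ln c + 6 * ln x + 1 / (c * x^6))"
    using l by (intro mult_left_mono) auto
  also have "\<dots> = x^2 * ln c + 6 * (x^2 * ln x) + 1 / (c * x^4)"
  proof -
    have "x^6 = x^2 * x^4" by (simp add: power_add[symmetric])
    then show ?thesis using x c by (simp add: field_simps)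
  qed
  also have "1 / (c * x^4) \<le> 1 / (c * \<epsilon>^6)"
  proof -
    have "\<epsilon>^6 \<le> \<epsilon>^4" using e by (intro power_decreasing) auto
    also have "\<epsilon>^4 \<le> x^4" using e True by (intro power_mono) auto
    finally have "\<epsilon>^6 \<le> x^4" .
    then show ?thesis using c e by (intro divide_left_mono mult_left_mono mult_pos_pos) auto
  qed
  finally show ?thesis using e c by (smt (verit) divide_pos_pos)
next
  case False
  have l1: "ln (1 + c * x^6) \<le> ln (1 + c)"
  proof (rule ln_mono)
    have "x^6 \<le> 1" using x by (intro power_le_one) auto
    then show "1 + c * x^6 \<le> 1 + c" using c by (simp add: mult_left_le)
  qed (use c x in \<open>auto intro: add_pos_nonneg\<close>)
  have l2: "ln (1 + c) \<le> ln c + 1 / c"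
  proof -
    have "1 + c = c * (1 + 1/c)" using c by (simp add: field_simps)
    moreover have "1 + 1/c > 0" using c by (simp add: add_pos_pos)
    ultimately have "ln (1 + c) = ln c + ln (1 + 1/c)" using c by (simp add: ln_mult)
    moreover have "ln (1 + 1/c) \<le> 1/c" using c by (intro ln_add_one_self_le_self) simp
    ultimately show ?thesis by simp
  qed
  have "x^2 * ln (1 + c * x^6) \<le> x^2 * (ln c + 1 / c)"
    using l1 l2 by (intro mult_left_mono) auto
  also have "\<dots> = x^2 * ln c + x^2 / c" by (simp add: algebra_simps)
  also have "x^2 / c \<le> 1 / c"
  proof -
    have "x^2 \<le> 1" using x by (intro power_le_one) auto
    then show ?thesis using c by (intro divide_right_mono) auto
  qed
  finally have a: "x^2 * ln (1 + c * x^6) \<le> x^2 * ln c + 1 / c" by simp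
  have b: "6 * (x^2 * ln x) \<ge> - 6 * \<epsilon>" using xlnx[OF x(1)] False by linarith
  have "0 \<le> 1 / (c * \<epsilon>^6)" using c e by simp
  then show ?thesis using a b by linarith
qed

definition Phi :: "nat \<Rightarrow> real" where
  "Phi n = (\<Sum>\<alpha><n. (real (n - \<alpha>) / real n)^2 * ln (1 + real n / 2 * (real (n - \<alpha>) / real n) ^ 6))"

definition QQ :: "nat \<Rightarrow> real" where "QQ n = real n * (real n + 1) * (2 * real n + 1) / 6"

definition RR :: "nat \<Rightarrow> real" where
  "RR n = 3 * ln (real n / 2) * QQ n / real n ^ 3 - ln (real n / 2)
     + 18 / real n ^ 3 * (GG (real n + 1) - GG 1 - ln (real n) * QQ n) + 2"

lemma Phi_reindex: "Phi n = (\<Sum>j=1..n. (real j / real n)^2 * ln (1 + real n / 2 * (real j / real n) ^ 6))"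
proof -
  define f where "f j = (real j / real n)^2 * ln (1 + real n / 2 * (real j / real n) ^ 6)" for j :: nat
  have "Phi n = (\<Sum>\<alpha><n. f (n - \<alpha>))" unfolding Phi_def f_def by simp
  also have "\<dots> = (\<Sum>\<alpha><n. (\<lambda>i. f (Suc i)) (n - Suc \<alpha>))"
    by (rule sum.cong[OF refl]) (simp add: Suc_diff_Suc)
  also have "\<dots> = (\<Sum>i<n. f (Suc i))" by (rule sum.nat_diff_reindex)
  also have "\<dots> = (\<Sum>j=1..n. f j)" by (simp add: sum.atLeast1_atMost_eq)
  finally show ?thesis unfolding f_def .
qed

lemma Phi_bound:
  assumes n: "1 \<le> n" and e: "0 < \<epsilon>" "\<epsilon> \<le> 1"
  shows "3 * Phi n / real n \<le> ln (real n / 2) - 2 + RR n + 18 * \<epsilon> + 6 / real n + 6 / (real n * \<epsilon>^6)"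
proof -
  define c where "c = real n / 2"
  define E where "E = 6 * \<epsilon> + 1 / c + 1 / (c * \<epsilon>^6)"
  have c: "0 < c" unfolding c_def using n by simp
  have nr: "real n > 0" using n by simp
  have T: "(real j / real n)^2 * ln (1 + c * (real j / real n) ^ 6)
      \<le> (real j / real n)^2 * ln c + 6 * ((real j ^ 2 * ln (real j) - real j ^ 2 * ln (real n)) / real n ^ 2) + E"
    if j: "j \<in> {1..n}" for j
  proof -
    have x: "0 < real j / real n" "real j / real n \<le> 1" using j nr by auto
    have "(real j / real n)^2 * ln (real j / real n) = (real j ^ 2 * ln (real j) - real j ^ 2 * ln (real n)) / real n ^ 2"
      using j nr by (simp add: ln_div power_divide field_simps)
    then show ?thesis using pt_bound[OF x c e] unfolding E_def by simp
  qed
  have P1: "Phi n \<le> (\<Sum>j=1..n. (real j / real n)^2 * ln c + 6 * ((real j ^ 2 * ln (real j) - real j ^ 2 * ln (real n)) / real n ^ 2) + E)"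
    unfolding Phi_reindex c_def[symmetric] by (rule sum_mono) (rule T)
  have P2: "(\<Sum>j=1..n. (real j / real n)^2 * ln c + 6 * ((real j ^ 2 * ln (real j) - real j ^ 2 * ln (real n)) / real n ^ 2) + E)
     = ln c * QQ n / real n ^ 2 + 6 / real n ^ 2 * ((\<Sum>j=1..n. real j ^ 2 * ln (real j)) - ln (real n) * QQ n) + real n * E"
  proof -
    have a: "(\<Sum>j=1..n. (real j / real n)^2 * ln c) = ln c * QQ n / real n ^ 2"
    proof -
      have "(\<Sum>j=1..n. (real j / real n)^2 * ln c) = ln c / real n ^ 2 * (\<Sum>j=1..n. real j ^ 2)"
        by (simp add: sum_distrib_left power_divide field_simps)
      then show ?thesis unfolding sum_sq QQ_def by simp
    qed
    have b: "(\<Sum>j=1..n. 6 * ((real j ^ 2 * ln (real j) - real j ^ 2 * ln (real n)) / real n ^ 2))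
       = 6 / real n ^ 2 * ((\<Sum>j=1..n. real j ^ 2 * ln (real j)) - ln (real n) * QQ n)"
    proof -
      have "(\<Sum>j=1..n. 6 * ((real j ^ 2 * ln (real j) - real j ^ 2 * ln (real n)) / real n ^ 2))
         = 6 / real n ^ 2 * ((\<Sum>j=1..n. real j ^ 2 * ln (real j)) - ln (real n) * (\<Sum>j=1..n. real j ^ 2))"
      proof -
        have "(\<Sum>j=1..n. 6 * ((real j ^ 2 * ln (real j) - real j ^ 2 * ln (real n)) / real n ^ 2))
          = (\<Sum>j=1..n. 6 / real n ^ 2 * (real j ^ 2 * ln (real j) - ln (real n) * real j ^ 2))"
          by (rule sum.cong[OF refl]) (simp add: field_simps)
        also have "\<dots> = 6 / real n ^ 2 * (\<Sum>j=1..n. real j ^ 2 * ln (real j) - ln (real n) * real j ^ 2)"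
          by (rule sum_distrib_left[symmetric])
        also have "(\<Sum>j=1..n. real j ^ 2 * ln (real j) - ln (real n) * real j ^ 2)
           = (\<Sum>j=1..n. real j ^ 2 * ln (real j)) - ln (real n) * (\<Sum>j=1..n. real j ^ 2)"
          by (simp add: sum_subtractf sum_distrib_left)
        finally show ?thesis .
      qed
      then show ?thesis unfolding sum_sq QQ_def by simp
    qed
    have d: "(\<Sum>j=1..n. E) = real n * E" by simp
    show ?thesis using a b d by (simp add: sum.distrib)
  qed
  have S: "(\<Sum>j=1..n. real j ^ 2 * ln (real j)) \<le> GG (real n + 1) - GG 1" by (rule sum_sqln)
  have P3: "Phi n \<le> ln c * QQ n / real n ^ 2 + 6 / real n ^ 2 * (GG (real n + 1) - GG 1 - ln (real n) * QQ n) + real n * E"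
  proof -
    have "6 / real n ^ 2 * ((\<Sum>j=1..n. real j ^ 2 * ln (real j)) - ln (real n) * QQ n)
       \<le> 6 / real n ^ 2 * (GG (real n + 1) - GG 1 - ln (real n) * QQ n)"
      using S nr by (intro mult_left_mono) auto
    then show ?thesis using P1 P2 by linarith
  qed
  have F1: "3 / real n * Phi n \<le> 3 / real n * (ln c * QQ n / real n ^ 2 + 6 / real n ^ 2 * (GG (real n + 1) - GG 1 - ln (real n) * QQ n) + real n * E)"
    using P3 nr by (intro mult_left_mono) auto
  have F2: "3 / real n * (ln c * QQ n / real n ^ 2 + 6 / real n ^ 2 * (GG (real n + 1) - GG 1 - ln (real n) * QQ n) + real n * E)
     = ln c - 2 + RR n + 3 * E"
    unfolding RR_def c_def using nr by (simp add: field_simps power2_eq_square power3_eq_cube)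
  have F3: "3 * E = 18 * \<epsilon> + 6 / real n + 6 / (real n * \<epsilon>^6)"
    unfolding E_def c_def using nr e by (simp add: field_simps)
  have F4: "3 * Phi n / real n = 3 / real n * Phi n" by simp
  show ?thesis using F1 F2 F3 F4 unfolding c_def by linarith
qed

lemma RR_lim: "RR \<longlonglongrightarrow> 0"
  unfolding RR_def QQ_def GG_def by real_asymp

definition eta :: "nat \<Rightarrow> real" where
  "eta n = (if n = 0 then 0 else max 0 (exp (3 * Phi n / real n) * (2 * exp 2) / real n - 1))"

lemma eta_alt: "1 \<le> n \<Longrightarrow> eta n = max 0 (exp (3 * Phi n / real n - ln (real n / 2) + 2) - 1)"
proof -
  assume n: "1 \<le> n"
  have "exp (3 * Phi n / real n - ln (real n / 2) + 2) = exp (3 * Phi n / real n) / exp (ln (real n / 2)) * exp 2"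
    by (simp add: exp_add exp_diff)
  also have "\<dots> = exp (3 * Phi n / real n) * (2 * exp 2) / real n" using n by simp
  finally show ?thesis unfolding eta_def using n by simp
qed

lemma eta_lim: "eta \<longlonglongrightarrow> 0"
proof (rule LIMSEQ_I)
  fix r :: real assume r: "0 < r"
  define \<delta> where "\<delta> = ln (1 + r / 2)"
  have d: "0 < \<delta>" unfolding \<delta>_def using r by simp
  define e where "e = min 1 (\<delta> / 72)"
  have e: "0 < e" "e \<le> 1" "18 * e \<le> \<delta> / 4" unfolding e_def using d by auto
  have l1: "eventually (\<lambda>n. RR n < \<delta> / 4) sequentially" using RR_lim d by (intro order_tendstoD(2)) auto
  have lim2: "(\<lambda>n. 6 / real n + 6 / (real n * e^6)) \<longlonglongrightarrow> 0"
  proof -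
    have "(\<lambda>n. 6 / real n) \<longlonglongrightarrow> 0" by real_asymp
    moreover have "(\<lambda>n. 6 / (real n * e^6)) \<longlonglongrightarrow> 0" using e(1) by real_asymp
    ultimately show ?thesis using tendsto_add by fastforce
  qed
  have l2: "eventually (\<lambda>n. 6 / real n + 6 / (real n * e^6) < \<delta> / 2) sequentially"
    using lim2 d by (intro order_tendstoD(2)) auto
  have "eventually (\<lambda>n. 1 \<le> n \<and> RR n < \<delta> / 4 \<and> 6 / real n + 6 / (real n * e^6) < \<delta> / 2) sequentially"
    using l1 l2 eventually_ge_at_top[of 1] by eventually_elim auto
  then obtain N where N: "\<And>n. N \<le> n \<Longrightarrow> 1 \<le> n \<and> RR n < \<delta> / 4 \<and> 6 / real n + 6 / (real n * e^6) < \<delta> / 2"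
    unfolding eventually_sequentially by blast
  show "\<exists>no. \<forall>n\<ge>no. norm (eta n - 0) < r"
  proof (intro exI allI impI)
    fix n assume "N \<le> n"
    note Nn = N[OF this]
    have "3 * Phi n / real n \<le> ln (real n / 2) - 2 + RR n + 18 * e + 6 / real n + 6 / (real n * e^6)"
      using Phi_bound[of n e] Nn e by simp
    then have D: "3 * Phi n / real n - ln (real n / 2) + 2 \<le> \<delta>" using Nn e by linarith
    have "exp (3 * Phi n / real n - ln (real n / 2) + 2) - 1 \<le> exp \<delta> - 1" using D by simp
    also have "exp \<delta> - 1 = r / 2" unfolding \<delta>_def using r by simp
    finally have X: "exp (3 * Phi n / real n - ln (real n / 2) + 2) - 1 \<le> r / 2" .
    have "eta n = max 0 (exp (3 * Phi n / real n - ln (real n / 2) + 2) - 1)" using eta_alt Nn by blast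
    then have "eta n \<le> r / 2" using X r by (simp add: max_def)
    moreover have "eta n \<ge> 0" unfolding eta_def by simp
    ultimately show "norm (eta n - 0) < r" using r by simp
  qed
qed


theorem theorem1p2:
  shows "\<exists>\<eta> :: nat \<Rightarrow> real. \<eta> \<longlonglongrightarrow> 0 \<and>
    (\<forall>n S. n \<ge> 1 \<longrightarrow> steiner_triple_system n S \<longrightarrow>
       real (card {M. perfect_matching {1..n} S M})
         \<le> ((1 + \<eta> n) * real n / (2 * exp 2)) powr (real n / 3))"
proof (intro exI conjI allI impI)
  show "eta \<longlonglongrightarrow> 0" by (rule eta_lim)
next
  fix n S assume n: "n \<ge> 1" and sts: "steiner_triple_system n S"
  interpret sts n S by (rule sts.intro[OF sts])
  have cPM: "card {M. perfect_matching {1..n} S M} = card PM" unfolding PM_def by simp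
  show "real (card {M. perfect_matching {1..n} S M}) \<le> ((1 + eta n) * real n / (2 * exp 2)) powr (real n / 3)"
  proof (cases "PM = {}")
    case True
    then show ?thesis unfolding cPM by simp
  next
    case False
    have nr: "real n > 0" using n by simp
    have lnN: "ln (real (card PM)) \<le> Phi n" unfolding Phi_def by (rule ln_PM_bound[OF False n])
    have Npos: "real (card PM) > 0" using False finite_PM card_gt_0_iff by fastforce
    define y where "y = 3 * Phi n / real n"
    have etab: "eta n \<ge> exp y * (2 * exp 2) / real n - 1" unfolding eta_def y_def using n by simp
    have b: "exp y \<le> (1 + eta n) * real n / (2 * exp 2)"
    proof -
      have "exp y * (2 * exp 2) / real n \<le> 1 + eta n" using etab by simp
      then have "exp y * (2 * exp 2) \<le> (1 + eta n) * real n" using nr by (simp add: divide_le_eq)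
      then show ?thesis by (simp add: le_divide_eq mult.commute)
    qed
    have "exp y powr (real n / 3) \<le> ((1 + eta n) * real n / (2 * exp 2)) powr (real n / 3)"
      by (rule powr_mono2) (use b nr in auto)
    moreover have "exp y powr (real n / 3) = exp (Phi n)"
      unfolding powr_def y_def using nr by simp
    moreover have "real (card PM) \<le> exp (Phi n)"
    proof -
      have "real (card PM) = exp (ln (real (card PM)))" using Npos by simp
      also have "\<dots> \<le> exp (Phi n)" using lnN by simp
      finally show ?thesis .
    qed
    ultimately show ?thesis unfolding cPM by linarith
  qed
qed

end
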